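(* Let $E/\mathbb{Q}$ be given by the model $y^2=x^3+Ax+B$ ($A,B\in\mathbb{Z}$) described in the context and $X=\max\{|A|^3,|B|^2\}$. Let $P,Q\in E(\mathbb{Q})$ satisfy $X^{1/6}\le x(P)<x(Q)$ and $x(P)=x_1/s$, $x(Q)=x_2/s$ with $x_1,x_2\in\mathbb{Z}$ and $s$ a positive integer. Then $h(P+Q)\le h(P)+2h(Q)+3h(s)+2.9$.
   Context: The model is obtained from a global minimal Weierstrass equation of $E$ by the substitution $x\mapsto \frac{1}{36}(x-3b_2)$, $y\mapsto \frac12(\frac{y}{108}-\frac{a_1}{36}(x-3b_2)-a_3)$. $h$ is the absolute logarithmic Weil height (so $h(s)=\log s$) and $h(P)=h(x(P))$. *)

theory Defs
  imports "HOL-Analysis.Analysis"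
begin

type_synonym wcoef = "rat \<times> rat \<times> rat \<times> rat \<times> rat"

fun w_b2 :: "wcoef \<Rightarrow> rat" where
  "w_b2 (a1,a2,a3,a4,a6) = a1^2 + 4 * a2"
fun w_b4 :: "wcoef \<Rightarrow> rat" where
  "w_b4 (a1,a2,a3,a4,a6) = 2 * a4 + a1 * a3"
fun w_b6 :: "wcoef \<Rightarrow> rat" where
  "w_b6 (a1,a2,a3,a4,a6) = a3^2 + 4 * a6"
fun w_b8 :: "wcoef \<Rightarrow> rat" where
  "w_b8 (a1,a2,a3,a4,a6) = a1^2 * a6 + 4 * a2 * a6 - a1 * a3 * a4 + a2 * a3^2 - a4^2"

definition w_c4 :: "wcoef \<Rightarrow> rat" where
  "w_c4 a = w_b2 a ^ 2 - 24 * w_b4 a"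
definition w_c6 :: "wcoef \<Rightarrow> rat" where
  "w_c6 a = - (w_b2 a ^ 3) + 36 * w_b2 a * w_b4 a - 216 * w_b6 a"
definition w_disc :: "wcoef \<Rightarrow> rat" where
  "w_disc a = - (w_b2 a ^ 2) * w_b8 a - 8 * w_b4 a ^ 3 - 27 * w_b6 a ^ 2
               + 9 * w_b2 a * w_b4 a * w_b6 a"

definition w_integral :: "wcoef \<Rightarrow> bool" where
  "w_integral a \<longleftrightarrow> (case a of (a1,a2,a3,a4,a6) \<Rightarrow>
      a1 \<in> \<int> \<and> a2 \<in> \<int> \<and> a3 \<in> \<int> \<and> a4 \<in> \<int> \<and> a6 \<in> \<int>)"

text \<open>Coefficients after the change of variables
  x = u^2 x' + r,  y = u^3 y' + s u^2 x' + t  (u \<noteq> 0).\<close>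
fun w_change :: "rat \<Rightarrow> rat \<Rightarrow> rat \<Rightarrow> rat \<Rightarrow> wcoef \<Rightarrow> wcoef" where
  "w_change uu rr ss tt (a1,a2,a3,a4,a6) =
     ((a1 + 2 * ss) / uu,
      (a2 - ss * a1 + 3 * rr - ss^2) / uu^2,
      (a3 + rr * a1 + 2 * tt) / uu^3,
      (a4 - ss * a3 + 2 * rr * a2 - (tt + rr * ss) * a1 + 3 * rr^2 - 2 * ss * tt) / uu^4,
      (a6 + rr * a4 + rr^2 * a2 + rr^3 - tt * a3 - tt^2 - rr * tt * a1) / uu^6)"

definition global_minimal :: "wcoef \<Rightarrow> bool" where
  "global_minimal a \<longleftrightarrow> w_integral a \<and> w_disc a \<noteq> 0 \<and>
     (\<forall>u r s t. u \<noteq> 0 \<longrightarrow> w_integral (w_change u r s t a) \<longrightarrow>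
        \<bar>w_disc a\<bar> \<le> \<bar>w_disc (w_change u r s t a)\<bar>)"

text \<open>Rational points of y^2 = x^3 + A x + B; None is the point at infinity.\<close>
type_synonym point = "(rat \<times> rat) option"

definition on_curve :: "int \<Rightarrow> int \<Rightarrow> point \<Rightarrow> bool" where
  "on_curve A B P \<longleftrightarrow> (case P of None \<Rightarrow> True
     | Some (x, y) \<Rightarrow> y^2 = x^3 + of_int A * x + of_int B)"

definition ec_add :: "int \<Rightarrow> int \<Rightarrow> point \<Rightarrow> point \<Rightarrow> point" where
  "ec_add A B P Q = (case P of None \<Rightarrow> Q | Some (x1, y1) \<Rightarrow>
     (case Q of None \<Rightarrow> P | Some (x2, y2) \<Rightarrow>
       (if x1 = x2 \<and> y1 = - y2 then None
        else let l = (if x1 = x2 then (3 * x1^2 + of_int A) / (2 * y1)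
                      else (y2 - y1) / (x2 - x1));
                 x3 = l^2 - x1 - x2
             in Some (x3, l * (x1 - x3) - y1))))"

definition hgt :: "rat \<Rightarrow> real" where
  "hgt q = (case quotient_of q of (n, d) \<Rightarrow> ln (real_of_int (max \<bar>n\<bar> \<bar>d\<bar>)))"

definition xcoord :: "point \<Rightarrow> rat" where
  "xcoord P = (case P of None \<Rightarrow> 0 | Some (x, y) \<Rightarrow> x)"

definition hpt :: "point \<Rightarrow> real" where
  "hpt P = hgt (xcoord P)"

end

theory Submission
  imports Defs
begin


lemma rat_sq_int:
  fixes r :: rat and k :: int
  assumes "r^2 = of_int k"
  shows "\<exists>m::int. r = of_int m"
proof -
  obtain n d where q: "quotient_of r = (n, d)" by (cases "quotient_of r") auto
  have rd: "r = of_int n / of_int d" using quotient_of_div[OF q] .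
  have dpos: "d > 0" using quotient_of_denom_pos[OF q] .
  have cop: "coprime n d" using quotient_of_coprime[OF q] .
  have "of_int (n^2) = (of_int (k * d^2) :: rat)"
    using assms dpos unfolding rd by (simp add: field_simps power_divide)
  hence e: "n^2 = k * d^2" by (simp only: of_int_eq_iff)
  have "d^2 dvd n^2" using e by simp
  moreover have "coprime (d^2) (n^2)" using cop by (simp add: coprime_commute)
  ultimately have "is_unit (d^2)" using coprime_absorb_left  by (metis coprime_common_divisor dvd_refl)
  hence "d = 1" using dpos by (simp add: is_unit_power_iff) (smt (verit) power2_eq_square mult_le_cancel_left1 mult_le_cancel_right1)
  thus ?thesis using rd by auto
qed

lemma hgt_le:
  fixes N D :: int
  assumes "D > 0"
  shows "hgt (of_int N / of_int D) \<le> ln (real_of_int (max \<bar>N\<bar> D))"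
proof -
  obtain n d where q: "quotient_of (of_int N / of_int D) = (n, d)" by (cases "quotient_of (of_int N / of_int D :: rat)") auto
  have rd: "(of_int N / of_int D :: rat) = of_int n / of_int d" using quotient_of_div[OF q] .
  have dpos: "d > 0" using quotient_of_denom_pos[OF q] .
  have cop: "coprime n d" using quotient_of_coprime[OF q] .
  have "of_int (n * D) = (of_int (N * d) :: rat)"
    using rd dpos assms by (simp add: field_simps)
  hence e: "n * D = N * d" by (simp only: of_int_eq_iff)
  have "d dvd n * D" using e by simp
  hence "d dvd D" using cop by (metis coprime_commute coprime_dvd_mult_right_iff)
  hence dD: "d \<le> D" using assms by (simp add: zdvd_imp_le)
  have "\<bar>n\<bar> * D = \<bar>N\<bar> * d" using e by (metis abs_mult abs_of_pos assms dpos)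
  also have "\<dots> \<le> \<bar>N\<bar> * D" using dD by (simp add: mult_left_mono)
  finally have nN: "\<bar>n\<bar> \<le> \<bar>N\<bar>" using assms by simp
  have "max \<bar>n\<bar> d \<le> max \<bar>N\<bar> D" using nN dD by (simp add: max_def)
  moreover have "max \<bar>n\<bar> d > 0" using dpos by simp
  ultimately have "real_of_int (max \<bar>n\<bar> d) \<le> real_of_int (max \<bar>N\<bar> D)" "real_of_int (max \<bar>n\<bar> d) > 0" by linarith+
  hence "ln (real_of_int (max \<bar>n\<bar> d)) \<le> ln (real_of_int (max \<bar>N\<bar> D))" by (intro ln_mono)
  thus ?thesis unfolding hgt_def q using dpos by simp
qed

lemma hgt_ge:
  fixes x s :: int
  assumes "s > 0"
  shows "ln (real_of_int (max \<bar>x\<bar> s)) \<le> hgt (of_int x / of_int s) + ln (real_of_int s)"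
proof -
  obtain n d where q: "quotient_of (of_int x / of_int s) = (n, d)" by (cases "quotient_of (of_int x / of_int s :: rat)") auto
  have rd: "(of_int x / of_int s :: rat) = of_int n / of_int d" using quotient_of_div[OF q] .
  have dpos: "d > 0" using quotient_of_denom_pos[OF q] .
  have "of_int (n * s) = (of_int (x * d) :: rat)"
    using rd dpos assms by (simp add: field_simps)
  hence e: "n * s = x * d" by (simp only: of_int_eq_iff)
  have "max \<bar>x\<bar> s * d = max (\<bar>x\<bar> * d) (s * d)" using dpos by (simp add: max_mult_distrib_right)
  also have "\<dots> = max (\<bar>n\<bar> * s) (s * d)" using e dpos assms by (metis abs_mult abs_of_pos)
  also have "\<dots> = s * max \<bar>n\<bar> d" using assms by (simp add: max_mult_distrib_left mult.commute)
  finally have k: "max \<bar>x\<bar> s * d = s * max \<bar>n\<bar> d" .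
  have "max \<bar>x\<bar> s \<le> max \<bar>x\<bar> s * d" using mult_left_mono[of 1 d "max \<bar>x\<bar> s"] dpos assms by simp
  hence le: "max \<bar>x\<bar> s \<le> s * max \<bar>n\<bar> d" using k by simp
  have p1: "max \<bar>n\<bar> d > 0" using dpos by simp
  have "ln (real_of_int (max \<bar>x\<bar> s)) \<le> ln (real_of_int (s * max \<bar>n\<bar> d))"
    using le assms by (subst ln_le_cancel_iff) (auto simp del: of_int_mult)
  also have "\<dots> = ln (real_of_int s) + ln (real_of_int (max \<bar>n\<bar> d))"
    using assms p1 by (simp add: ln_mult)
  finally show ?thesis unfolding hgt_def q using dpos by (simp add: add.commute)
qed

lemma ln12: "ln (12::real) \<le> 2.9"
proof -
  have "1 + 0.29 \<le> exp (0.29::real)" by (rule exp_ge_add_one_self)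
  hence A: "(1.29::real)^10 \<le> exp 0.29 ^ 10" by (intro power_mono) auto
  have B: "exp (0.29::real) ^ 10 = exp 2.9" by (simp add: exp_of_nat_mult[symmetric])
  have C: "(12::real) \<le> 1.29^10" by (simp add: eval_nat_numeral)
  have "12 \<le> exp (2.9::real)" using A B C by linarith
  thus ?thesis by (metis ln_exp ln_mono zero_less_numeral)
qed



lemma bounds:
  fixes x1 x2 s A B F1 F2 M :: int
  assumes x1: "0 \<le> x1" and x12: "x1 < x2" and s: "s > 0"
    and hA: "\<bar>A\<bar> * s^2 \<le> x1^2" and hB: "\<bar>B\<bar> * s^3 \<le> x1^3"
    and F1: "F1 = x1^3 + A * x1 * s^2 + B * s^3"
    and F2: "F2 = x2^3 + A * x2 * s^2 + B * s^3"
    and F1p: "0 \<le> F1" and F2p: "0 \<le> F2" and M: "M^2 = F1 * F2"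
  shows "\<bar>(x1+x2) * (x1 * x2 + A * s^2) + 2 * B * s^3 - 2 * M\<bar> \<le> 12 * x1 * x2^2"
proof -
  have x2: "0 \<le> x2" using x1 x12 by simp
  have a1: "\<bar>A * x1 * s^2\<bar> \<le> x1^3"
  proof -
    have "\<bar>A * x1 * s^2\<bar> = (\<bar>A\<bar> * s^2) * x1" using x1 by (simp add: abs_mult)
    also have "\<dots> \<le> x1^2 * x1" using hA x1 by (rule mult_right_mono)
    finally show ?thesis by (simp add: power3_eq_cube power2_eq_square)
  qed
  have a2: "\<bar>A * x2 * s^2\<bar> \<le> x1^2 * x2"
  proof -
    have "\<bar>A * x2 * s^2\<bar> = (\<bar>A\<bar> * s^2) * x2" using x2 by (simp add: abs_mult)
    also have "\<dots> \<le> x1^2 * x2" using hA x2 by (rule mult_right_mono)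
    finally show ?thesis .
  qed
  have c1: "x1^2 * x2 \<le> x2^3" using x1 x12
    by (metis less_imp_le mult_right_mono power2_eq_square power3_eq_cube mult_mono x2)
  have c2: "x1^3 \<le> x2^3" using x1 x12 by (simp add: power_mono)
  have f1: "F1 \<le> 3 * x1^3"
  proof -
    have "\<bar>B * s^3\<bar> \<le> x1^3" using hB s by (simp add: abs_mult)
    thus ?thesis using F1 a1 by (smt (verit) abs_ge_self)
  qed
  have f2: "F2 \<le> 3 * x2^3"
  proof -
    have "\<bar>B * s^3\<bar> \<le> x1^3" using hB s by (simp add: abs_mult)
    thus ?thesis using F2 a2 c1 c2 by (smt (verit) abs_ge_self)
  qed
  have "F1 * F2 \<le> (3 * x1^3) * (3 * x2^3)" using f1 f2 F1p F2p x1 by (intro mult_mono) auto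
  also have "\<dots> = 9 * x1^3 * x2^3" by simp
  also have "\<dots> \<le> 9 * x1^2 * x2^4"
  proof -
    have "x1^3 * x2^3 = (x1^2 * x2^3) * x1" by (simp add: algebra_simps power2_eq_square power3_eq_cube)
    also have "\<dots> \<le> (x1^2 * x2^3) * x2" using x1 x2 x12 by (intro mult_left_mono) auto
    also have "\<dots> = x1^2 * x2^4" by (simp add: algebra_simps power2_eq_square power3_eq_cube power4_eq_xxxx)
    finally show ?thesis by simp
  qed
  also have "\<dots> = (3 * x1 * x2^2)^2" by (simp add: algebra_simps power2_eq_square power4_eq_xxxx)
  finally have "M^2 \<le> (3 * x1 * x2^2)^2" using M by simp
  hence "\<bar>M\<bar> \<le> \<bar>3 * x1 * x2^2\<bar>" by (simp only: abs_le_square_iff)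
  hence hM: "\<bar>M\<bar> \<le> 3 * x1 * x2^2" using x1 x2 by simp
  have t1: "\<bar>(x1+x2) * (x1 * x2 + A * s^2)\<bar> \<le> 4 * x1 * x2^2"
  proof -
    have "\<bar>A * s^2\<bar> \<le> x1^2" using hA by (simp add: abs_mult)
    also have "x1^2 \<le> x1 * x2" using x1 x12 by (simp add: power2_eq_square mult_left_mono)
    finally have q: "\<bar>A * s^2\<bar> \<le> x1 * x2" .
    have "\<bar>x1 * x2 + A * s^2\<bar> \<le> \<bar>x1 * x2\<bar> + \<bar>A * s^2\<bar>" by (rule abs_triangle_ineq)
    moreover have "\<bar>x1 * x2\<bar> = x1 * x2" using x1 x2 by simp
    ultimately have "\<bar>x1 * x2 + A * s^2\<bar> \<le> 2 * x1 * x2" using q by linarith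
    moreover have "\<bar>x1 + x2\<bar> \<le> 2 * x2" using x1 x12 by simp
    ultimately have "\<bar>x1+x2\<bar> * \<bar>x1 * x2 + A * s^2\<bar> \<le> (2 * x2) * (2 * x1 * x2)" by (intro mult_mono) (auto simp: x1 x2)
    hence "\<bar>(x1+x2) * (x1 * x2 + A * s^2)\<bar> \<le> (2 * x2) * (2 * x1 * x2)" by (simp only: abs_mult)
    also have "(2 * x2) * (2 * x1 * x2) = 4 * x1 * x2^2" by (simp add: algebra_simps power2_eq_square)
    finally show ?thesis .
  qed
  have t2: "\<bar>2 * B * s^3\<bar> \<le> 2 * x1 * x2^2"
  proof -
    have "\<bar>2 * B * s^3\<bar> = 2 * (\<bar>B\<bar> * s^3)" using s by (simp add: abs_mult)
    also have "\<dots> \<le> 2 * x1^3" using hB by simp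
    also have "x1^3 \<le> x1 * x2^2"
    proof -
      have "x1^2 \<le> x2^2" using x1 x12 by (simp add: power_mono)
      hence "x1 * x1^2 \<le> x1 * x2^2" using x1 by (rule mult_left_mono)
      thus ?thesis by (simp add: power2_eq_square power3_eq_cube)
    qed
    finally show ?thesis by simp
  qed
  have "\<bar>(x1 + x2) * (x1 * x2 + A * s^2) + 2 * B * s^3 - 2 * M\<bar> \<le> \<bar>(x1 + x2) * (x1 * x2 + A * s^2) + 2 * B * s^3\<bar> + \<bar>2 * M\<bar>" by (rule abs_triangle_ineq4)
  moreover have "\<bar>(x1 + x2) * (x1 * x2 + A * s^2) + 2 * B * s^3\<bar> \<le> \<bar>(x1 + x2) * (x1 * x2 + A * s^2)\<bar> + \<bar>2 * B * s^3\<bar>" by (rule abs_triangle_ineq)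
  moreover have "\<bar>2 * M\<bar> = 2 * \<bar>M\<bar>" by simp
  ultimately show ?thesis using t1 t2 hM by linarith
qed



theorem corollary3p4:
  fixes a :: wcoef and A B :: int and P Q :: point and x1 x2 s :: int
  assumes "global_minimal a"
    and "of_int A = - 27 * w_c4 a" and "of_int B = - 54 * w_c6 a"
    and "on_curve A B P" and "on_curve A B Q"
    and "P \<noteq> None" and "Q \<noteq> None"
    and "root 6 (real_of_int (max (\<bar>A\<bar>^3) (B^2))) \<le> real_of_rat (xcoord P)"
    and "xcoord P < xcoord Q"
    and "s > 0"
    and "xcoord P = of_int x1 / of_int s" and "xcoord Q = of_int x2 / of_int s"
  shows "hpt (ec_add A B P Q) \<le> hpt P + 2 * hpt Q + 3 * ln (real_of_int s) + 2.9"
proof -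
  obtain u y1 where P: "P = Some (u, y1)" using assms(6) by auto
  obtain v y2 where Q: "Q = Some (v, y2)" using assms(7) by auto
  have u: "u = of_int x1 / of_int s" using assms(11) P by (simp add: xcoord_def)
  have v: "v = of_int x2 / of_int s" using assms(12) Q by (simp add: xcoord_def)
  have uv: "u < v" using assms(9) P Q by (simp add: xcoord_def)
  have c1: "y1^2 = u^3 + of_int A * u + of_int B" using assms(4) P by (simp add: on_curve_def)
  have c2: "y2^2 = v^3 + of_int A * v + of_int B" using assms(5) Q by (simp add: on_curve_def)
  have s: "s > 0" by fact
  have sq: "(of_int s :: rat) \<noteq> 0" using s by simp
  define X where "X = real_of_int (max (\<bar>A\<bar>^3) (B^2))"
  define r where "r = real_of_int x1 / real_of_int s"
  have ru: "real_of_rat u = r" unfolding u r_def by (simp add: of_rat_divide)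
  have X0: "X \<ge> 0" unfolding X_def by (simp add: le_max_iff_disj)
  have Rr: "root 6 X \<le> r" using assms(8) ru P unfolding X_def by (simp add: xcoord_def)
  have r0: "r \<ge> 0" using Rr X0 by (meson order_trans real_root_ge_zero)
  have "X = (root 6 X)^6" using X0 by (simp add: real_root_pow_pos2)
  also have "\<dots> \<le> r^6" using Rr X0 by (intro power_mono) auto
  finally have Xr: "X \<le> r^6" .
  have XA: "real_of_int (\<bar>A\<bar>^3) \<le> X" unfolding X_def by (simp only: of_int_le_iff max.cobounded1)
  have XB: "real_of_int (B^2) \<le> X" unfolding X_def by (simp only: of_int_le_iff max.cobounded2)
  have "real_of_int \<bar>A\<bar> ^ 3 \<le> (r^2)^3" using Xr XA by (simp add: power_mult[symmetric])
  hence Ar: "real_of_int \<bar>A\<bar> \<le> r^2" using r0 by (subst (asm) power_mono_iff) auto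
  have "real_of_int \<bar>B\<bar> ^ 2 \<le> (r^3)^2" using Xr XB by (simp add: power_mult[symmetric])
  hence Br: "real_of_int \<bar>B\<bar> \<le> r^3" using r0 by (subst (asm) power_mono_iff) auto
  have sr: "real_of_int s > 0" using s by simp
  have "real_of_int (\<bar>A\<bar> * s^2) \<le> real_of_int (x1^2)"
  proof -
    have "real_of_int (\<bar>A\<bar> * s^2) = real_of_int \<bar>A\<bar> * real_of_int s ^ 2" by simp
    also have "\<dots> \<le> r^2 * real_of_int s ^ 2" using Ar by (intro mult_right_mono) auto
    also have "\<dots> = real_of_int (x1^2)" unfolding r_def using sr by (simp add: power_divide)
    finally show ?thesis .
  qed
  hence hA: "\<bar>A\<bar> * s^2 \<le> x1^2" by (simp only: of_int_le_iff)
  have "real_of_int (\<bar>B\<bar> * s^3) \<le> real_of_int (x1^3)"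
  proof -
    have "real_of_int (\<bar>B\<bar> * s^3) = real_of_int \<bar>B\<bar> * real_of_int s ^ 3" by simp
    also have "\<dots> \<le> r^3 * real_of_int s ^ 3" using Br s by (intro mult_right_mono) auto
    also have "\<dots> = real_of_int (x1^3)" unfolding r_def using sr by (simp add: power_divide)
    finally show ?thesis .
  qed
  hence hB: "\<bar>B\<bar> * s^3 \<le> x1^3" by (simp only: of_int_le_iff)
  have x1: "0 \<le> x1" using r0 sr unfolding r_def by (simp add: zero_le_divide_iff)
  have x12: "x1 < x2" using uv s unfolding u v by (simp add: divide_less_cancel)
  define S where "S = (of_int s :: rat)"
  have S0: "S \<noteq> 0" unfolding S_def using s by simp
  define F1 where "F1 = x1^3 + A * x1 * s^2 + B * s^3"
  define F2 where "F2 = x2^3 + A * x2 * s^2 + B * s^3"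
  have eF1: "of_int F1 = S^3 * y1^2" unfolding F1_def S_def c1 u using s by (simp add: field_simps power3_eq_cube power2_eq_square)
  have eF2: "of_int F2 = S^3 * y2^2" unfolding F2_def S_def c2 v using s by (simp add: field_simps power3_eq_cube power2_eq_square)
  have "(S^3 * y1 * y2)^2 = of_int (F1 * F2)" using eF1 eF2 by (simp add: power_mult_distrib power2_eq_square algebra_simps)
  then obtain M where M: "S^3 * y1 * y2 = of_int M" using rat_sq_int by blast
  have "of_int (M^2) = (S^3 * y1 * y2)^2" using M by simp
  also have "\<dots> = (S^3 * y1^2) * (S^3 * y2^2)" by (simp add: power_mult_distrib power2_eq_square algebra_simps)
  also have "\<dots> = of_int (F1 * F2)" using eF1 eF2 by simp
  finally have "of_int (M^2) = (of_int (F1 * F2) :: rat)" .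
  hence M2: "M^2 = F1 * F2" by (simp only: of_int_eq_iff)
  have "of_int F1 \<ge> (0::rat)" using eF1 s by (simp add: S_def)
  hence F1p: "F1 \<ge> 0" by simp
  have "of_int F2 \<ge> (0::rat)" using eF2 s by (simp add: S_def)
  hence F2p: "F2 \<ge> 0" by simp
  have bnd: "\<bar>(x1 + x2) * (x1 * x2 + A * s^2) + 2 * B * s^3 - 2 * M\<bar> \<le> 12 * x1 * x2^2"
    by (rule bounds[OF x1 x12 s hA hB F1_def F2_def F1p F2p M2])
  define N where "N = F1 + F2 - 2 * M - (x1 + x2) * (x2 - x1)^2"
  have NN: "N = (x1 + x2) * (x1 * x2 + A * s^2) + 2 * B * s^3 - 2 * M"
    unfolding N_def F1_def F2_def by (simp add: algebra_simps power2_eq_square power3_eq_cube)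
  define D where "D = s * (x2 - x1)^2"
  have Dp: "D > 0" unfolding D_def using s x12 by simp
  have xe: "xcoord (ec_add A B P Q) = ((y2 - y1) / (v - u))^2 - u - v"
    using uv unfolding P Q ec_add_def xcoord_def by (simp add: Let_def)
  have y12: "(y2 - y1)^2 = of_int (F1 + F2 - 2 * M) / S^3"
    using eF1 eF2 M S0 by (simp add: field_simps power2_eq_square)
  have vu: "v - u = of_int (x2 - x1) / S" unfolding u v S_def by (simp add: diff_divide_distrib)
  have d0: "(of_int (x2 - x1) :: rat) \<noteq> 0" using x12 by simp
  have gen0: "\<And>K S a b d :: rat. S \<noteq> 0 \<Longrightarrow> d \<noteq> 0 \<Longrightarrow>
      (K / S^3) / (d / S)^2 - a / S - b / S = (K - (a + b) * d^2) / (S * d^2)"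
    by (simp add: field_simps) (simp add: power2_eq_square power3_eq_cube algebra_simps)
  have gen: "\<And>K S a b :: rat. S \<noteq> 0 \<Longrightarrow> b - a \<noteq> 0 \<Longrightarrow>
      (K / S^3) / ((b - a) / S)^2 - a / S - b / S = (K - (a + b) * (b - a)^2) / (S * (b - a)^2)"
    by (rule gen0)
  have oN: "of_int N = of_int (F1 + F2 - 2 * M) - (of_int x1 + of_int x2) * (of_int x2 - of_int x1 :: rat)^2"
    unfolding N_def by simp
  have oD: "of_int D = S * (of_int x2 - of_int x1 :: rat)^2" unfolding D_def S_def by simp
  have d1: "(of_int x2 - of_int x1 :: rat) \<noteq> 0" using d0 by simp
  have vu': "v - u = (of_int x2 - of_int x1) / S" using vu by simp
  have u': "u = of_int x1 / S" and v': "v = of_int x2 / S" using u v S_def by auto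
  have "xcoord (ec_add A B P Q) = (y2 - y1)^2 / (v - u)^2 - u - v" unfolding xe by (simp only: power_divide)
  also have "\<dots> = (of_int (F1 + F2 - 2 * M) / S^3) / ((of_int x2 - of_int x1) / S)^2 - of_int x1 / S - of_int x2 / S"
    unfolding y12 vu' by (simp only: u' v')
  also have "\<dots> = of_int N / of_int D" unfolding oN oD by (rule gen[OF S0 d1])
  finally have "xcoord (ec_add A B P Q) = of_int N / of_int D" .
  hence h1: "hpt (ec_add A B P Q) \<le> ln (real_of_int (max \<bar>N\<bar> D))"
    unfolding hpt_def using hgt_le[OF Dp] by simp
  define m1 where "m1 = max \<bar>x1\<bar> s"
  define m2 where "m2 = max \<bar>x2\<bar> s"
  have m1p: "m1 > 0" and m2p: "m2 > 0" unfolding m1_def m2_def using s by auto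
  have x1m: "x1 \<le> m1" and sm: "s \<le> m1" unfolding m1_def by auto
  have x2m: "x2 \<le> m2" unfolding m2_def by auto
  have x2p: "0 \<le> x2" using x1 x12 by simp
  have x22: "x2^2 \<le> m2^2" using x2m x2p by (simp add: power_mono)
  have "\<bar>N\<bar> \<le> 12 * x1 * x2^2" using bnd NN by simp
  also have "\<dots> \<le> 12 * m1 * m2^2" using x1m x22 x1 by (intro mult_mono) auto
  finally have Nb: "\<bar>N\<bar> \<le> 12 * m1 * m2^2" .
  have "(x2 - x1)^2 \<le> x2^2" using x1 x12 by (simp add: power_mono)
  hence "D \<le> s * x2^2" unfolding D_def using s by simp
  also have "\<dots> \<le> m1 * m2^2" using sm x22 m1p by (intro mult_mono) auto
  also have "\<dots> \<le> 12 * m1 * m2^2" using m1p m2p by simp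
  finally have Db: "D \<le> 12 * m1 * m2^2" .
  have mx: "real_of_int (max \<bar>N\<bar> D) \<le> 12 * real_of_int m1 * real_of_int m2 ^ 2"
  proof -
    have "max \<bar>N\<bar> D \<le> 12 * m1 * m2^2" using Nb Db by simp
    hence "real_of_int (max \<bar>N\<bar> D) \<le> real_of_int (12 * m1 * m2^2)" by (simp only: of_int_le_iff)
    thus ?thesis by simp
  qed
  have mxp: "real_of_int (max \<bar>N\<bar> D) > 0" using Dp by simp
  have "ln (real_of_int (max \<bar>N\<bar> D)) \<le> ln (12 * real_of_int m1 * real_of_int m2 ^ 2)"
    using mx mxp by (rule ln_mono)
  also have "\<dots> = ln 12 + ln (real_of_int m1) + 2 * ln (real_of_int m2)"
    using m1p m2p by (simp add: ln_mult ln_realpow)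
  finally have h2: "ln (real_of_int (max \<bar>N\<bar> D)) \<le> ln 12 + ln (real_of_int m1) + 2 * ln (real_of_int m2)" .
  have hP: "ln (real_of_int m1) \<le> hpt P + ln (real_of_int s)"
    unfolding m1_def hpt_def assms(11) by (rule hgt_ge[OF s])
  have hQ: "ln (real_of_int m2) \<le> hpt Q + ln (real_of_int s)"
    unfolding m2_def hpt_def assms(12) by (rule hgt_ge[OF s])
  show ?thesis using h1 h2 hP hQ ln12 by linarith
qed

end
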